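(* The system \[ \frac{dR}{dZ} = -\tan\theta+\frac{R}{2Z},\qquad \frac{d\theta}{dZ} = (n-1)\Bigl(\frac{1}{\cos\theta}-\frac{1}{R}\Bigr),\qquad Z>0,\ R>0,\ \theta\in\bigl(-\tfrac{\pi}{2},\tfrac{\pi}{2}\bigr), \] admits a unique formal solution of the form \[ R(Z)=\sum_{k\in\mathbb{N}}\frac{R_k}{Z^k},\qquad \theta(Z)=\sum_{k\in\mathbb{N}}\frac{\theta_k}{Z^k},\qquad (R_k,\theta_k)\in\mathbb{R}^2,\ R_0>0,\ -\tfrac{\pi}{2}<\theta_0<\tfrac{\pi}{2}. \] Moreover, the expansion $\sum_{k}R_k/Z^k$ is even in $Z$ (i.e. $R_k=0$ for $k$ odd) and the expansion $\sum_k\theta_k/Z^k$ is odd in $Z$ (i.e. $\theta_k=0$ for $k$ even).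
   Context: Let $n\ge 2$ be an integer. The axisymmetric capillary equation in $\mathbb{R}^{n+1}$, with the normalization $\kappa=n-1$, is the system $dr/dz=-\tan\theta$, $d\theta/dz=(n-1)\bigl(z/\cos\theta-1/r\bigr)$ with $r>0$, $\theta\in(-\pi/2,\pi/2)$. After the change of variables $(R,Z)=(zr,\,z^2/2)$ it becomes the system in $(R,\theta)$ as functions of $Z$ displayed in the claim. A formal solution means an expansion of the stated form which, when substituted into that system with $\tan\theta$ and $\cos\theta$ replaced by their power series in $\theta$, makes both equations hold at every order in $Z^{-1}$. *)

theory Defs
  imports "HOL-Analysis.Derivative" "HOL-Computational_Algebra.Formal_Power_Series"
begin

(* Formal power series are taken in the variable w = 1/Z, i.e. the fps with
   coefficients (R_k) represents R(Z) = sum_k R_k / Z^k. *)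

definition taylor_fps :: "(real \<Rightarrow> real) \<Rightarrow> real \<Rightarrow> real fps" where
  "taylor_fps f a = Abs_fps (\<lambda>j. (deriv ^^ j) f a / fact j)"

definition subst_fps :: "(real \<Rightarrow> real) \<Rightarrow> real fps \<Rightarrow> real fps" where
  "subst_fps f th = fps_compose (taylor_fps f (fps_nth th 0)) (th - fps_const (fps_nth th 0))"

(* d/dZ of a series in w = 1/Z: since dw/dZ = -w^2, d/dZ = -w^2 d/dw *)
definition dZ :: "real fps \<Rightarrow> real fps" where
  "dZ F = - (fps_X ^ 2 * fps_deriv F)"

definition formal_solution :: "nat \<Rightarrow> real fps \<Rightarrow> real fps \<Rightarrow> bool" where
  "formal_solution n R th \<longleftrightarrow>
     dZ R = - subst_fps tan th + fps_const (1/2) * fps_X * R \<and>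
     dZ th = fps_const (real n - 1) * (inverse (subst_fps cos th) - inverse R)"

definition admissible_formal_solution :: "nat \<Rightarrow> real fps \<Rightarrow> real fps \<Rightarrow> bool" where
  "admissible_formal_solution n R th \<longleftrightarrow>
     fps_nth R 0 > 0 \<and> - (pi/2) < fps_nth th 0 \<and> fps_nth th 0 < pi/2 \<and> formal_solution n R th"

end

theory Submission
  imports Defs "HOL-Computational_Algebra.Polynomial"
begin
unbundle no vec_syntax
unbundle fps_syntax


lemma sum_single_top:
  fixes f :: "nat \<Rightarrow> real"
  assumes "\<forall>l<m. f l = 0"
  shows "(\<Sum>l=0..m. f l) = f m"
proof -
  have "{0..m} = insert m {0..<m}" by auto
  hence "(\<Sum>l=0..m. f l) = f m + (\<Sum>l=0..<m. f l)" by simp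
  also have "(\<Sum>l=0..<m. f l) = 0" using assms by simp
  finally show ?thesis by simp
qed

lemma mult_low_zero_nth:
  fixes e Q :: "real fps"
  assumes "\<forall>l<m. e$l = 0"
  shows "(e * Q)$m = e$m * Q$0"
  unfolding fps_mult_nth using assms by (subst sum_single_top) auto

lemma pow_sum0:
  fixes b b' :: "real fps"
  assumes "b$0 = 0" "b'$0 = 0"
  shows "(\<Sum>j<i. b^(i - Suc j) * b'^j)$0 = (if i = 1 then 1 else 0)"
proof -
  have "(\<Sum>j<i. b^(i - Suc j) * b'^j)$0 = (\<Sum>j<i. (0::real)^(i - Suc j) * 0^j)"
    by (simp add: fps_sum_nth fps_nth_power_0 assms)
  also have "\<dots> = (if i = 1 then 1 else 0)"
  proof (cases "i = 1")
    case False
    have "\<forall>j<i. (0::real)^(i - Suc j) * 0^j = 0"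
      using False by (auto simp: power_0_left)
    thus ?thesis using False by simp
  qed simp
  finally show ?thesis .
qed

lemma compose_diff:
  fixes a b b' :: "real fps"
  assumes b0: "b$0 = 0" and b'0: "b'$0 = 0" and ag: "\<forall>j<m. b$j = b'$j" and m: "m \<ge> 1"
  shows "(a oo b')$m - (a oo b)$m = a$1 * (b'$m - b$m)"
proof -
  define e where "e = b' - b"
  have e0: "\<forall>l<m. e$l = 0" using ag by (simp add: e_def)
  have pw: "(b'^i)$m - (b^i)$m = (b'$m - b$m) * (if i = 1 then 1 else 0)" for i
  proof -
    have "b'^i - b^i = e * (\<Sum>j<i. b^(i - Suc j) * b'^j)"
      unfolding e_def by (rule power_diff_sumr2)
    hence "(b'^i)$m - (b^i)$m = (e * (\<Sum>j<i. b^(i - Suc j) * b'^j))$m"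
      by (metis fps_sub_nth)
    also have "\<dots> = e$m * (if i = 1 then 1 else 0)"
      by (subst mult_low_zero_nth[OF e0]) (simp add: pow_sum0[OF b0 b'0])
    finally show ?thesis by (simp add: e_def)
  qed
  have "(a oo b')$m - (a oo b)$m = (\<Sum>i=0..m. a$i * ((b'^i)$m - (b^i)$m))"
    by (simp add: fps_compose_nth sum_subtractf[symmetric] algebra_simps)
  also have "\<dots> = (\<Sum>i=0..m. (if i = 1 then a$1 * (b'$m - b$m) else 0))"
    by (rule sum.cong) (auto simp: pw)
  also have "\<dots> = a$1 * (b'$m - b$m)" using m by simp
  finally show ?thesis .
qed

lemma inv_diff:
  fixes A B :: "real fps"
  assumes A0: "A$0 = B$0" "A$0 \<noteq> 0" and ag: "\<forall>j<m. A$j = B$j"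
  shows "(inverse A)$m - (inverse B)$m = - (A$m - B$m) / (A$0)^2"
proof -
  have B0: "B$0 \<noteq> 0" using A0 by simp
  have "inverse A - inverse B = (B - A) * (inverse A * inverse B)"
  proof -
    have "(B - A) * (inverse A * inverse B) = (B * inverse B) * inverse A - (A * inverse A) * inverse B"
      by (simp add: algebra_simps)
    also have "\<dots> = inverse A - inverse B"
      using inverse_mult_eq_1'[OF B0] inverse_mult_eq_1'[OF A0(2)] by simp
    finally show ?thesis by simp
  qed
  hence "(inverse A)$m - (inverse B)$m = ((B - A) * (inverse A * inverse B))$m"
    by (metis fps_sub_nth)
  also have "\<dots> = (B$m - A$m) * (inverse (A$0) * inverse (B$0))"
    by (subst mult_low_zero_nth) (use ag in auto)
  also have "\<dots> = - (A$m - B$m) / (A$0)^2"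
    using A0 by (simp add: field_simps power2_eq_square)
  finally show ?thesis .
qed

lemma inv_agree:
  fixes A B :: "real fps"
  assumes "A$0 \<noteq> 0" "\<forall>j\<le>k. A$j = B$j"
  shows "\<forall>j\<le>k. (inverse A)$j = (inverse B)$j"
proof (intro allI impI)
  fix j assume "j \<le> k"
  hence "(inverse A)$j - (inverse B)$j = 0"
    using inv_diff[of A B j] assms by auto
  thus "(inverse A)$j = (inverse B)$j" by simp
qed

lemma taylor_0: "taylor_fps f a $ 0 = f a"
  by (simp add: taylor_fps_def)

lemma taylor_1: "taylor_fps f a $ 1 = deriv f a"
  by (simp add: taylor_fps_def)

lemma subst_diff:
  assumes "th$0 = th'$0" "\<forall>j<m. th$j = th'$j" "m \<ge> 1"
  shows "(subst_fps f th')$m - (subst_fps f th)$m = deriv f (th$0) * (th'$m - th$m)"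
proof -
  have "(subst_fps f th')$m - (subst_fps f th)$m =
     taylor_fps f (th$0) $ 1 * ((th' - fps_const (th$0))$m - (th - fps_const (th$0))$m)"
    unfolding subst_fps_def assms(1)[symmetric]
    by (rule compose_diff) (use assms in auto)
  thus ?thesis using taylor_1[of f "th$0"] by simp
qed

lemma subst_nth0: "(subst_fps f th)$0 = f (th$0)"
  by (simp add: subst_fps_def taylor_0)

lemma subst_agree:
  assumes "\<forall>j\<le>k. th$j = th'$j"
  shows "\<forall>j\<le>k. (subst_fps f th)$j = (subst_fps f th')$j"
proof (intro allI impI)
  fix j assume j: "j \<le> k"
  show "(subst_fps f th)$j = (subst_fps f th')$j"
  proof (cases "j = 0")
    case True thus ?thesis using assms by (simp add: subst_nth0)
  next
    case False
    hence "(subst_fps f th')$j - (subst_fps f th)$j = 0"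
      using subst_diff[of th th' j f] assms j by auto
    thus ?thesis by simp
  qed
qed



lemma deriv_tan0: "deriv tan (0::real) = 1"
  by (rule DERIV_imp_deriv) (use DERIV_tan[of 0] in simp)

lemma deriv_cos0: "deriv cos (0::real) = 0"
  by (rule DERIV_imp_deriv) (use DERIV_cos[of 0] in simp)

lemma deriv_cos_iter: "(deriv ^^ j) cos = (\<lambda>x. cos (x + real j * (pi/2)))"
proof (induction j)
  case 0 thus ?case by simp
next
  case (Suc j)
  have "deriv (\<lambda>x. cos (x + real j * (pi/2))) y = cos (y + real (Suc j) * (pi/2))" for y
  proof (rule DERIV_imp_deriv)
    have "DERIV (\<lambda>x. cos (x + real j * (pi/2))) y :> - sin (y + real j * (pi/2)) * 1"
      by (auto intro!: derivative_eq_intros)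
    moreover have "cos (y + real (Suc j) * (pi/2)) = - sin (y + real j * (pi/2))"
    proof -
      have "y + real (Suc j) * (pi/2) = (y + real j * (pi/2)) + pi/2" by (simp add: algebra_simps)
      thus ?thesis by (simp only: cos_add cos_pi_half sin_pi_half)
    qed
    ultimately show "DERIV (\<lambda>x. cos (x + real j * (pi/2))) y :> cos (y + real (Suc j) * (pi/2))"
      by simp
  qed
  moreover have "(deriv ^^ Suc j) cos = deriv (\<lambda>x. cos (x + real j * (pi/2)))"
    by (subst funpow.simps(2), subst o_apply, subst Suc.IH, rule refl)
  ultimately show ?case by (simp only: fun_eq_iff) simp
qed

lemma deriv_cos_odd: assumes "odd j" shows "(deriv ^^ j) cos (0::real) = 0"
proof -
  note \<open>odd j\<close>
  hence "odd (int j)" by simp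
  hence "cos (of_int (int j) * (pi/2)) = 0" using cos_zero_iff_int by blast
  moreover have "(deriv ^^ j) cos 0 = cos (of_int (int j) * (pi/2))" by (simp add: deriv_cos_iter)
  ultimately show ?thesis by simp
qed

primrec TP :: "nat \<Rightarrow> real poly" where
  "TP 0 = [:0, 1:]"
| "TP (Suc j) = pderiv (TP j) * [:1, 0, 1:]"

lemma pderiv_parity:
  fixes p :: "real poly"
  assumes "\<forall>t. poly p (-t) = s * poly p t"
  shows "poly (pderiv p) (-t) = - s * poly (pderiv p) t"
proof -
  have "DERIV (\<lambda>t. poly p (-t)) t :> poly (pderiv p) (-t) * (-1)"
    by (rule DERIV_chain2[OF poly_DERIV]) (auto intro!: derivative_eq_intros)
  moreover have "(\<lambda>t. poly p (-t)) = (\<lambda>t. s * poly p t)" using assms by auto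
  moreover have "DERIV (\<lambda>t. s * poly p t) t :> s * poly (pderiv p) t"
    by (auto intro!: derivative_eq_intros)
  ultimately have "poly (pderiv p) (-t) * (-1) = s * poly (pderiv p) t"
    using DERIV_unique by metis
  thus ?thesis by simp
qed

lemma TP_parity: "\<forall>t. poly (TP j) (-t) = (-1)^(Suc j) * poly (TP j) t"
proof (induction j)
  case 0 thus ?case by simp
next
  case (Suc j)
  show ?case
  proof
    fix t
    have "poly (pderiv (TP j)) (-t) = - ((-1)^(Suc j)) * poly (pderiv (TP j)) t"
      by (rule pderiv_parity[OF Suc])
    thus "poly (TP (Suc j)) (-t) = (-1)^(Suc (Suc j)) * poly (TP (Suc j)) t"
      by (simp add: algebra_simps)
  qed
qed

lemma deriv_tan_iter:
  "(x::real) \<in> {-(pi/2)<..<pi/2} \<Longrightarrow> (deriv ^^ j) tan x = poly (TP j) (tan x)"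
proof (induction j arbitrary: x)
  case 0 thus ?case by simp
next
  case (Suc j)
  have cx: "cos x \<noteq> 0" using cos_gt_zero_pi[of x] Suc.prems by auto
  have "DERIV (\<lambda>y. poly (TP j) (tan y)) x :> poly (pderiv (TP j)) (tan x) * inverse ((cos x)\<^sup>2)"
    by (rule DERIV_chain2[OF poly_DERIV DERIV_tan[OF cx]])
  moreover have "inverse ((cos x)\<^sup>2) = 1 + tan x * tan x"
    using cx sin_cos_squared_add[of x]
    by (simp add: tan_def field_simps power2_eq_square)
  ultimately have "DERIV (\<lambda>y. poly (TP j) (tan y)) x :> poly (TP (Suc j)) (tan x)"
    by (simp add: algebra_simps)
  hence "DERIV ((deriv ^^ j) tan) x :> poly (TP (Suc j)) (tan x)"
    by (rule has_field_derivative_transform_within_open[where S="{-(pi/2)<..<pi/2}"])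
       (use Suc in auto)
  thus ?case by (simp add: DERIV_imp_deriv)
qed

lemma deriv_tan_even: assumes e: "even j" shows "(deriv ^^ j) tan (0::real) = 0"
proof -
  have "(deriv ^^ j) tan 0 = poly (TP j) 0" using deriv_tan_iter[of 0 j] by simp
  moreover have "poly (TP j) (-0) = (-1)^(Suc j) * poly (TP j) 0" using TP_parity[of j] by blast
  hence "poly (TP j) 0 = - poly (TP j) 0" using e by simp
  ultimately show ?thesis by simp
qed

abbreviation "MX \<equiv> - fps_X :: real fps"

lemma MX_nth: "(F oo MX)$j = (-1)^j * F$j"
  by (simp add: fps_compose_uminus')

lemma taylor_cos_refl: "taylor_fps cos 0 oo MX = taylor_fps cos 0"
proof (rule fps_ext)
  fix j show "(taylor_fps cos 0 oo MX) $ j = taylor_fps cos 0 $ j"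
    by (cases "even j") (auto simp: MX_nth taylor_fps_def deriv_cos_odd)
qed

lemma taylor_tan_refl: "taylor_fps tan 0 oo MX = - taylor_fps tan 0"
proof (rule fps_ext)
  fix j show "(taylor_fps tan 0 oo MX) $ j = (- taylor_fps tan 0) $ j"
    by (cases "even j") (auto simp: MX_nth taylor_fps_def deriv_tan_even)
qed



lemma dZ_nth0: "(dZ F)$0 = 0"
  by (simp add: dZ_def fps_X_power_mult_nth)

lemma dZ_nthS: "(dZ F)$(Suc k) = - real k * F$k"
  by (cases k) (simp_all add: dZ_def fps_X_power_mult_nth, simp add: algebra_simps)

lemma lin_nth0: "(fps_const c * fps_X * (R::real fps))$0 = 0"
  by (simp add: mult.assoc)

lemma lin_nthS: "(fps_const c * fps_X * (R::real fps))$(Suc k) = c * R$k"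
  by (simp add: mult.assoc)

lemma all_nat_split: "(\<forall>m::nat. P m) = (P 0 \<and> (\<forall>k. P (Suc k)))"
  by (metis nat.exhaust)

lemma sol_iff:
  "formal_solution n R th \<longleftrightarrow>
   ((subst_fps tan th)$0 = 0 \<and> (\<forall>k. - real k * R$k = -(subst_fps tan th)$(Suc k) + R$k/2)) \<and>
   ((real n - 1) * ((inverse (subst_fps cos th))$0 - (inverse R)$0) = 0 \<and>
    (\<forall>k. - real k * th$k = (real n - 1)*((inverse (subst_fps cos th))$(Suc k) - (inverse R)$(Suc k))))"
  unfolding formal_solution_def fps_eq_iff
  apply (subst all_nat_split, subst (2) all_nat_split)
  by (simp add: dZ_nth0 dZ_nthS lin_nth0 lin_nthS)

lemma adm_consts:
  assumes n: "n \<ge> 2" and a: "admissible_formal_solution n R th"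
  shows "th$0 = 0" "R$0 = 1"
proof -
  have sol: "formal_solution n R th" and r: "-(pi/2) < th$0" "th$0 < pi/2" and R0: "R$0 > 0"
    using a by (auto simp: admissible_formal_solution_def)
  have "tan (th$0) = 0" using sol by (simp add: sol_iff subst_nth0)
  hence "arctan (tan (th$0)) = 0" by simp
  thus th0: "th$0 = 0" using arctan_tan[OF r] by simp
  have "(real n - 1) * (inverse (cos (th$0)) - inverse (R$0)) = 0"
    using sol by (simp add: sol_iff subst_nth0)
  moreover have "real n - 1 \<noteq> 0" using n by simp
  ultimately have "inverse (R$0) = 1" using th0 by simp
  thus "R$0 = 1" by (metis inverse_1 inverse_inverse_eq)
qed

lemma uniq:
  assumes n: "n \<ge> 2" and a: "admissible_formal_solution n R th"
    and b: "admissible_formal_solution n R' th'"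
  shows "R = R' \<and> th = th'"
proof -
  have s1: "formal_solution n R th" and s2: "formal_solution n R' th'"
    using a b by (auto simp: admissible_formal_solution_def)
  note c1 = adm_consts[OF n a] and c2 = adm_consts[OF n b]
  have n1: "real n - 1 \<noteq> 0" using n by simp
  have "\<forall>j\<le>k. R$j = R'$j \<and> th$j = th'$j" for k
  proof (induction k)
    case 0 thus ?case using c1 c2 by simp
  next
    case (Suc k)
    have agT: "\<forall>j<Suc k. th$j = th'$j" and agR: "\<forall>j<Suc k. R$j = R'$j" using Suc by auto
    have e1: "- real k * R$k = -(subst_fps tan th)$(Suc k) + R$k/2"
      "- real k * R'$k = -(subst_fps tan th')$(Suc k) + R'$k/2"
      using s1 s2 unfolding sol_iff by auto
    have "R$k = R'$k" using agR by simp
    hence "(subst_fps tan th)$(Suc k) = (subst_fps tan th')$(Suc k)" using e1 by simp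
    moreover have "(subst_fps tan th')$(Suc k) - (subst_fps tan th)$(Suc k) = deriv tan (th$0) * (th'$(Suc k) - th$(Suc k))"
      by (rule subst_diff) (use agT in auto)
    ultimately have tS: "th$(Suc k) = th'$(Suc k)" using c1 deriv_tan0 by simp
    have agT': "\<forall>j\<le>Suc k. th$j = th'$j" using agT tS le_Suc_eq by auto
    have "\<forall>j\<le>Suc k. (subst_fps cos th)$j = (subst_fps cos th')$j"
      by (rule subst_agree[OF agT'])
    hence "\<forall>j\<le>Suc k. (inverse (subst_fps cos th))$j = (inverse (subst_fps cos th'))$j"
      by (rule inv_agree[rotated]) (simp add: subst_nth0 c1)
    hence "(inverse (subst_fps cos th))$(Suc k) = (inverse (subst_fps cos th'))$(Suc k)" by simp
    moreover have "- real k * th$k = (real n - 1)*((inverse (subst_fps cos th))$(Suc k) - (inverse R)$(Suc k))"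
      "- real k * th'$k = (real n - 1)*((inverse (subst_fps cos th'))$(Suc k) - (inverse R')$(Suc k))"
      using s1 s2 unfolding sol_iff by auto
    moreover have "th$k = th'$k" using agT by simp
    ultimately have "(real n - 1)*((inverse (subst_fps cos th))$(Suc k) - (inverse R)$(Suc k)) = (real n - 1)*((inverse (subst_fps cos th))$(Suc k) - (inverse R')$(Suc k))"
      by simp
    hence "(inverse R)$(Suc k) = (inverse R')$(Suc k)" using n1 by simp
    moreover have "(inverse R)$(Suc k) - (inverse R')$(Suc k) = - (R$(Suc k) - R'$(Suc k)) / (R$0)^2"
      by (rule inv_diff) (use agR c1 c2 in auto)
    ultimately have "R$(Suc k) = R'$(Suc k)" using c1 by simp
    thus ?case using agR agT' le_Suc_eq by auto
  qed
  thus ?thesis by (auto simp: fps_eq_iff)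
qed



fun cf :: "nat \<Rightarrow> nat \<Rightarrow> (nat \<Rightarrow> real) \<times> (nat \<Rightarrow> real)" where
  "cf n 0 = ((\<lambda>j. if j = 0 then 1 else 0), (\<lambda>j. 0))"
| "cf n (Suc k) =
    ((fst (cf n k))(Suc k := inverse (Abs_fps (fst (cf n k))) $ Suc k
         - inverse (subst_fps cos (Abs_fps (snd (cf n k)))) $ Suc k
         - real k * snd (cf n k) k / (real n - 1)),
     (snd (cf n k))(Suc k := (real k + 1/2) * fst (cf n k) k
         - subst_fps tan (Abs_fps (snd (cf n k))) $ Suc k))"

lemma cf_high: "k < j \<Longrightarrow> fst (cf n k) j = 0 \<and> snd (cf n k) j = 0"
  by (induction k) auto

lemma cf_stable: "j \<le> k \<Longrightarrow> fst (cf n k) j = fst (cf n j) j \<and> snd (cf n k) j = snd (cf n j) j"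
proof (induction k)
  case 0 thus ?case by simp
next
  case (Suc k)
  thus ?case by (cases "j = Suc k") auto
qed

definition "Rs n = Abs_fps (\<lambda>j. fst (cf n j) j)"
definition "Ts n = Abs_fps (\<lambda>j. snd (cf n j) j)"

lemma Rs0: "Rs n $ 0 = 1" by (simp add: Rs_def)
lemma Ts0: "Ts n $ 0 = 0" by (simp add: Ts_def)

lemma Rs_ag: "\<forall>j\<le>k. Rs n $ j = Abs_fps (fst (cf n k)) $ j"
proof (intro allI impI)
  fix j assume "j \<le> k"
  from conjunct1[OF cf_stable[OF this, of n]] show "Rs n $ j = Abs_fps (fst (cf n k)) $ j"
    by (simp add: Rs_def)
qed
lemma Ts_ag: "\<forall>j\<le>k. Ts n $ j = Abs_fps (snd (cf n k)) $ j"
proof (intro allI impI)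
  fix j assume "j \<le> k"
  from conjunct2[OF cf_stable[OF this, of n]] show "Ts n $ j = Abs_fps (snd (cf n k)) $ j"
    by (simp add: Ts_def)
qed

lemma existence:
  assumes n: "n \<ge> 2"
  shows "admissible_formal_solution n (Rs n) (Ts n)"
proof -
  have n1: "real n - 1 \<noteq> 0" using n by simp
  have eq: "- real k * Rs n $ k = - subst_fps tan (Ts n) $ Suc k + Rs n $ k / 2 \<and>
        - real k * Ts n $ k = (real n - 1) * (inverse (subst_fps cos (Ts n)) $ Suc k - inverse (Rs n) $ Suc k)" for k
  proof -
    define r where "r = fst (cf n k)"
    define t where "t = snd (cf n k)"
    define T where "T = Abs_fps t"
    define RK where "RK = Abs_fps r"
    have T0: "T$0 = 0" and RK0: "RK$0 = 1" using Ts_ag[of k n] Rs_ag[of k n] Ts0 Rs0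
      by (auto simp: T_def RK_def t_def r_def)
    have TS: "T $ Suc k = 0" "RK $ Suc k = 0" using cf_high[of k "Suc k" n]
      by (auto simp: T_def RK_def t_def r_def)
    have agT: "\<forall>j\<le>k. T$j = Ts n $ j" using Ts_ag[of k n] by (simp add: T_def t_def)
    have agR: "\<forall>j\<le>k. RK$j = Rs n $ j" using Rs_ag[of k n] by (simp add: RK_def r_def)
    have TsS: "Ts n $ Suc k = (real k + 1/2) * r k - subst_fps tan T $ Suc k"
      by (simp add: Ts_def T_def r_def t_def)
    have RsS: "Rs n $ Suc k = inverse RK $ Suc k - inverse (subst_fps cos T) $ Suc k - real k * t k / (real n - 1)"
      by (simp add: Rs_def T_def RK_def r_def t_def)
    have rk: "r k = Rs n $ k" and tk: "t k = Ts n $ k" using agR agT by (auto simp: RK_def T_def)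
    have "subst_fps tan (Ts n) $ Suc k - subst_fps tan T $ Suc k = deriv tan (T$0) * (Ts n $ Suc k - T $ Suc k)"
      by (rule subst_diff) (use agT T0 Ts0 in auto)
    hence tanS: "subst_fps tan (Ts n) $ Suc k = (real k + 1/2) * Rs n $ k"
      using T0 deriv_tan0 TS TsS rk by simp
    have agT': "\<forall>j<Suc k. T$j = Ts n $ j" using agT by auto
    have cosag: "\<forall>j\<le>Suc k. subst_fps cos T $ j = subst_fps cos (Ts n) $ j"
    proof (intro allI impI)
      fix j assume "j \<le> Suc k"
      hence "j \<le> k \<or> j = Suc k" by auto
      thus "subst_fps cos T $ j = subst_fps cos (Ts n) $ j"
      proof
        assume "j \<le> k" thus ?thesis using subst_agree[OF agT] by blast
      next
        assume j: "j = Suc k"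
        have "subst_fps cos (Ts n) $ Suc k - subst_fps cos T $ Suc k = deriv cos (T$0) * (Ts n $ Suc k - T $ Suc k)"
          by (rule subst_diff) (use agT T0 Ts0 in auto)
        thus ?thesis using j T0 deriv_cos0 by simp
      qed
    qed
    have invC: "inverse (subst_fps cos T) $ Suc k = inverse (subst_fps cos (Ts n)) $ Suc k"
      using inv_agree[OF _ cosag] by (simp add: subst_nth0 T0)
    have "inverse (Rs n) $ Suc k - inverse RK $ Suc k = - (Rs n $ Suc k - RK $ Suc k) / (Rs n $ 0)^2"
      by (rule inv_diff) (use agR RK0 Rs0 in auto)
    hence invR: "inverse (Rs n) $ Suc k = inverse RK $ Suc k - Rs n $ Suc k"
      using Rs0 TS by simp
    show ?thesis
    proof
      show "- real k * Rs n $ k = - subst_fps tan (Ts n) $ Suc k + Rs n $ k / 2"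
        using tanS by (simp add: algebra_simps)
      show "- real k * Ts n $ k = (real n - 1) * (inverse (subst_fps cos (Ts n)) $ Suc k - inverse (Rs n) $ Suc k)"
        using invR RsS invC tk n1 by (simp add: field_simps)
    qed
  qed
  have "formal_solution n (Rs n) (Ts n)"
    unfolding sol_iff using eq by (simp add: subst_nth0 Ts0 Rs0)
  thus ?thesis by (simp add: admissible_formal_solution_def Rs0 Ts0)
qed



lemma MX0: "MX $ 0 = 0" by simp

lemma dZ_refl: "dZ (F oo MX) = - (dZ F oo MX)"
proof (rule fps_ext)
  fix m show "dZ (F oo MX) $ m = (- (dZ F oo MX)) $ m"
    by (cases m) (simp_all add: dZ_nth0 dZ_nthS MX_nth dZ_def[of F, symmetric])
qed

lemma dZ_neg: "dZ (- F) = - dZ F"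
  by (simp add: dZ_def fps_deriv_neg)

lemma subst_center: "th $ 0 = 0 \<Longrightarrow> subst_fps f th = taylor_fps f 0 oo th"
  by (simp add: subst_fps_def)

lemma neg_refl: "b $ 0 = 0 \<Longrightarrow> - b = MX oo b"
  by (simp add: fps_compose_uminus)

lemma lin_refl: "(fps_const c * fps_X * R) oo MX = - (fps_const c * fps_X * (R oo MX))"
  by (simp add: fps_compose_mult_distrib fps_compose_uminus)

lemma refl_sol:
  assumes n: "n \<ge> 2" and a: "admissible_formal_solution n R th"
  shows "admissible_formal_solution n (R oo MX) (- (th oo MX))"
proof -
  note c = adm_consts[OF n a]
  have sol: "formal_solution n R th" using a by (simp add: admissible_formal_solution_def)
  define b where "b = th oo MX"
  have b0: "b $ 0 = 0" using c by (simp add: b_def)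
  have th'0: "(- b) $ 0 = 0" using b0 by simp
  have gen: "subst_fps f (- b) = (taylor_fps f 0 oo MX) oo b" for f
  proof -
    have "subst_fps f (- b) = taylor_fps f 0 oo (- b)" by (rule subst_center[OF th'0])
    also have "\<dots> = taylor_fps f 0 oo (MX oo b)" by (subst neg_refl[OF b0]) (rule refl)
    also have "\<dots> = (taylor_fps f 0 oo MX) oo b" by (rule fps_compose_assoc[OF b0 MX0])
    finally show ?thesis .
  qed
  have gen2: "taylor_fps f 0 oo b = subst_fps f th oo MX" for f
    unfolding b_def subst_center[OF c(1)] by (rule fps_compose_assoc[OF MX0 c(1)])
  have tanS: "subst_fps tan (- b) = - (subst_fps tan th oo MX)"
    unfolding gen taylor_tan_refl fps_compose_uminus gen2 ..
  have cosS: "subst_fps cos (- b) = subst_fps cos th oo MX"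
    unfolding gen taylor_cos_refl gen2 ..
  have e1: "dZ R = - subst_fps tan th + fps_const (1/2) * fps_X * R"
   and e2: "dZ th = fps_const (real n - 1) * (inverse (subst_fps cos th) - inverse R)"
    using sol by (auto simp: formal_solution_def)
  have C0: "subst_fps cos th $ 0 \<noteq> 0" using c by (simp add: subst_nth0)
  have R0: "R $ 0 \<noteq> 0" using c by simp
  have "dZ (R oo MX) = - (dZ R oo MX)" by (rule dZ_refl)
  also have "\<dots> = - ((- subst_fps tan th + fps_const (1/2) * fps_X * R) oo MX)" using e1 by simp
  also have "\<dots> = - subst_fps tan (- b) + fps_const (1/2) * fps_X * (R oo MX)"
    unfolding fps_compose_add_distrib fps_compose_uminus lin_refl tanS by (simp add: algebra_simps)
  finally have f1: "dZ (R oo MX) = - subst_fps tan (- b) + fps_const (1/2) * fps_X * (R oo MX)" .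
  have "dZ (- b) = dZ th oo MX" by (simp add: dZ_neg b_def dZ_refl)
  also have "\<dots> = fps_const (real n - 1) * ((inverse (subst_fps cos th) oo MX) - (inverse R oo MX))"
    using e2 by (simp add: fps_compose_mult_distrib fps_compose_sub_distrib)
  also have "\<dots> = fps_const (real n - 1) * (inverse (subst_fps cos (- b)) - inverse (R oo MX))"
    by (simp add: cosS fps_inverse_compose C0 R0)
  finally have f2: "dZ (- b) = fps_const (real n - 1) * (inverse (subst_fps cos (- b)) - inverse (R oo MX))" .
  show ?thesis
    unfolding admissible_formal_solution_def formal_solution_def b_def[symmetric]
    using f1 f2 c b0 by simp
qed


theorem proposition1:
  fixes n :: nat
  assumes "n \<ge> 2"
  shows "(\<exists>!p. admissible_formal_solution n (fst p) (snd p)) \<and>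
         (\<forall>R th. admissible_formal_solution n R th \<longrightarrow>
            (\<forall>k. odd k \<longrightarrow> fps_nth R k = 0) \<and> (\<forall>k. even k \<longrightarrow> fps_nth th k = 0))"
proof
  show "\<exists>!p. admissible_formal_solution n (fst p) (snd p)"
  proof (rule ex1I[of _ "(Rs n, Ts n)"])
    show "admissible_formal_solution n (fst (Rs n, Ts n)) (snd (Rs n, Ts n))"
      using existence[OF assms] by simp
  next
    fix p assume "admissible_formal_solution n (fst p) (snd p)"
    from uniq[OF assms this existence[OF assms]] show "p = (Rs n, Ts n)"
      by (simp add: prod_eq_iff)
  qed
next
  show "\<forall>R th. admissible_formal_solution n R th \<longrightarrow>
            (\<forall>k. odd k \<longrightarrow> fps_nth R k = 0) \<and> (\<forall>k. even k \<longrightarrow> fps_nth th k = 0)"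
  proof (intro allI impI)
    fix R th assume a: "admissible_formal_solution n R th"
    from uniq[OF assms a refl_sol[OF assms a]]
    have e: "R = R oo MX" "th = - (th oo MX)" by auto
    have r: "R $ k = (-1)^k * R $ k" for k using arg_cong[OF e(1), of "\<lambda>F. F $ k"] by (simp add: MX_nth)
    have t: "th $ k = - ((-1)^k * th $ k)" for k using arg_cong[OF e(2), of "\<lambda>F. F $ k"] by (simp add: MX_nth)
    show "(\<forall>k. odd k \<longrightarrow> fps_nth R k = 0) \<and> (\<forall>k. even k \<longrightarrow> fps_nth th k = 0)"
    proof (intro conjI allI impI)
      fix k :: nat assume "odd k" thus "R $ k = 0" using r[of k] by simp
    next
      fix k :: nat assume "even k" thus "th $ k = 0" using t[of k] by simp
    qed
  qed
qed

end
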